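(* Let $q\ge1$, $d=2^q$. Each of the following subspaces $W$ of $\mathcal{M}_d^{\otimes 2}$ satisfies $\varphi^{\otimes 2}(C)W\subseteq W$ for all $C\in\mathcal{C}_q$ (some of them may be $0$ for $q=1$): $V_{\mathrm{id}}=\mathrm{span}\{\sigma_0\otimes\sigma_0\}$, $V_{\mathrm r}=\mathrm{span}\{\sigma_0\otimes\tau:\tau\in\boldsymbol{\sigma}_q\}$, $V_{\mathrm l}=\mathrm{span}\{\tau\otimes\sigma_0:\tau\in\boldsymbol{\sigma}_q\}$, $V_{\mathrm d}=\mathrm{span}\{\tau\otimes\tau:\tau\in\boldsymbol{\sigma}_q\}$, $V_{[\mathrm S]}=\mathrm{span}\{S_{\sigma,\tau}:\tau\in\boldsymbol{\sigma}_q,\sigma\in\boldsymbol{C}_\tau\}$, $V_{\{\mathrm S\}}=\mathrm{span}\{S_{\sigma,\tau}:\tau\in\boldsymbol{\sigma}_q,\sigma\in\boldsymbol{N}_\tau\}$, $V_{[\mathrm A]}=\mathrm{span}\{A_{\sigma,\tau}:\tau\in\boldsymbol{\sigma}_q,\sigma\in\boldsymbol{C}_\tau\}$, $V_{\{\mathrm A\}}=\mathrm{span}\{A_{\sigma,\tau}:\tau\in\boldsymbol{\sigma}_q,\sigma\in\boldsymbol{N}_\tau\}$.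
   Context: $\mathcal{M}_d$ is the space of complex $d\times d$ matrices. $X,Y,Z$ are the single-qubit Pauli matrices; $\hat{\mathcal{P}}_q$ is the set of $q$-fold tensor products of elements of $\{\mathbb{1},X,Y,Z\}$. Set $\sigma_0=\mathbb{1}/\sqrt d$, $\boldsymbol{\sigma}_q=\{P/\sqrt d:P\in\hat{\mathcal P}_q\setminus\{\mathbb 1\}\}$. For $\tau\in\boldsymbol{\sigma}_q$: $\boldsymbol{N}_\tau=\{\sigma\in\boldsymbol{\sigma}_q:\sigma\tau+\tau\sigma=0\}$, $\boldsymbol{C}_\tau=\{\sigma\in\boldsymbol{\sigma}_q\setminus\{\tau\}:\sigma\tau=\tau\sigma\}$. For $\sigma\ne\tau$ in $\boldsymbol{\sigma}_q$, $S_{\sigma,\tau}=\frac{1}{\sqrt2}(\sigma\otimes\tau+\tau\otimes\sigma)$ and $A_{\sigma,\tau}=\frac{1}{\sqrt2}(\sigma\otimes\tau-\tau\otimes\sigma)$. The Pauli group $\mathcal{P}_q\subset U(2^q)$ consists of all $q$-fold tensor products of elements of the group generated by $X,Z,i\mathbb 1_2$; the Clifford group is $\mathcal{C}_q=\{U\in U(2^q):U\mathcal{P}_qU^\dagger\subseteq\mathcal{P}_q\}/U(1)$. The two-copy representation of $\mathcal C_q$ on $\mathcal{M}_d^{\otimes2}$ is given by $\varphi^{\otimes2}(C)(A\otimes B)=(CAC^\dagger)\otimes(CBC^\dagger)$, extended linearly (independent of the phase of $C$). *)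

theory Defs
  imports "Jordan_Normal_Form.Schur_Decomposition"
begin

(* Kronecker (tensor) product of matrices; M_d \<otimes> M_d is identified with M_{d^2} via it *)
definition kron :: "complex mat \<Rightarrow> complex mat \<Rightarrow> complex mat" where
  "kron A B = mat (dim_row A * dim_row B) (dim_col A * dim_col B)
     (\<lambda>(i,j). A $$ (i div dim_row B, j div dim_col B) * B $$ (i mod dim_row B, j mod dim_col B))"

definition pX :: "complex mat" where "pX = mat_of_rows_list 2 [[0,1],[1,0]]"
definition pY :: "complex mat" where "pY = mat_of_rows_list 2 [[0,-\<i>],[\<i>,0]]"
definition pZ :: "complex mat" where "pZ = mat_of_rows_list 2 [[1,0],[0,-1]]"

inductive_set pauli1_group :: "complex mat set" where
  one: "1\<^sub>m 2 \<in> pauli1_group"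
| genX: "pX \<in> pauli1_group"
| genZ: "pZ \<in> pauli1_group"
| geni: "\<i> \<cdot>\<^sub>m 1\<^sub>m 2 \<in> pauli1_group"
| mult: "a \<in> pauli1_group \<Longrightarrow> b \<in> pauli1_group \<Longrightarrow> a * b \<in> pauli1_group"

fun tensor_power_set :: "complex mat set \<Rightarrow> nat \<Rightarrow> complex mat set" where
  "tensor_power_set S 0 = {1\<^sub>m 1}"
| "tensor_power_set S (Suc q) = {kron a B | a B. a \<in> S \<and> B \<in> tensor_power_set S q}"

definition pauli_group :: "nat \<Rightarrow> complex mat set" where
  "pauli_group q = tensor_power_set pauli1_group q"

definition pauli_strings :: "nat \<Rightarrow> complex mat set" where
  "pauli_strings q = tensor_power_set {1\<^sub>m 2, pX, pY, pZ} q"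

definition unitary_mat :: "nat \<Rightarrow> complex mat \<Rightarrow> bool" where
  "unitary_mat n U \<longleftrightarrow> U \<in> carrier_mat n n \<and> mat_adjoint U * U = 1\<^sub>m n \<and> U * mat_adjoint U = 1\<^sub>m n"

(* representatives of the Clifford group C_q (the quotient by U(1) is irrelevant:
   the two-copy action does not depend on the phase) *)
definition clifford :: "nat \<Rightarrow> complex mat set" where
  "clifford q = {U. unitary_mat (2^q) U \<and>
       (\<forall>P \<in> pauli_group q. U * P * mat_adjoint U \<in> pauli_group q)}"

(* two-copy representation on M_d \<otimes> M_d \<cong> M_{d^2}: on A \<otimes> B it gives (CAC\<dagger>) \<otimes> (CBC\<dagger>) *)
definition two_copy :: "complex mat \<Rightarrow> complex mat \<Rightarrow> complex mat" where
  "two_copy C M = kron C C * M * mat_adjoint (kron C C)"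

definition sigma0 :: "nat \<Rightarrow> complex mat" where
  "sigma0 q = complex_of_real (1 / sqrt (2^q)) \<cdot>\<^sub>m 1\<^sub>m (2^q)"

definition sigmas :: "nat \<Rightarrow> complex mat set" where
  "sigmas q = (\<lambda>P. complex_of_real (1 / sqrt (2^q)) \<cdot>\<^sub>m P) ` (pauli_strings q - {1\<^sub>m (2^q)})"

definition N_set :: "nat \<Rightarrow> complex mat \<Rightarrow> complex mat set" where
  "N_set q \<tau> = {\<sigma> \<in> sigmas q. \<sigma> * \<tau> + \<tau> * \<sigma> = 0\<^sub>m (2^q) (2^q)}"

definition C_set :: "nat \<Rightarrow> complex mat \<Rightarrow> complex mat set" where
  "C_set q \<tau> = {\<sigma> \<in> sigmas q - {\<tau>}. \<sigma> * \<tau> = \<tau> * \<sigma>}"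

definition S_mat :: "complex mat \<Rightarrow> complex mat \<Rightarrow> complex mat" where
  "S_mat \<sigma> \<tau> = complex_of_real (1 / sqrt 2) \<cdot>\<^sub>m (kron \<sigma> \<tau> + kron \<tau> \<sigma>)"

definition A_mat :: "complex mat \<Rightarrow> complex mat \<Rightarrow> complex mat" where
  "A_mat \<sigma> \<tau> = complex_of_real (1 / sqrt 2) \<cdot>\<^sub>m (kron \<sigma> \<tau> - kron \<tau> \<sigma>)"

inductive_set mat_span :: "nat \<Rightarrow> complex mat set \<Rightarrow> complex mat set" for n S where
  zero: "0\<^sub>m n n \<in> mat_span n S"
| gen: "x \<in> S \<Longrightarrow> x \<in> mat_span n S"
| add: "x \<in> mat_span n S \<Longrightarrow> y \<in> mat_span n S \<Longrightarrow> x + y \<in> mat_span n S"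
| smult: "x \<in> mat_span n S \<Longrightarrow> c \<cdot>\<^sub>m x \<in> mat_span n S"

definition V_id :: "nat \<Rightarrow> complex mat set" where
  "V_id q = mat_span (4^q) {kron (sigma0 q) (sigma0 q)}"
definition V_r :: "nat \<Rightarrow> complex mat set" where
  "V_r q = mat_span (4^q) {kron (sigma0 q) \<tau> | \<tau>. \<tau> \<in> sigmas q}"
definition V_l :: "nat \<Rightarrow> complex mat set" where
  "V_l q = mat_span (4^q) {kron \<tau> (sigma0 q) | \<tau>. \<tau> \<in> sigmas q}"
definition V_d :: "nat \<Rightarrow> complex mat set" where
  "V_d q = mat_span (4^q) {kron \<tau> \<tau> | \<tau>. \<tau> \<in> sigmas q}"
definition V_S_comm :: "nat \<Rightarrow> complex mat set" where
  "V_S_comm q = mat_span (4^q) {S_mat \<sigma> \<tau> | \<sigma> \<tau>. \<tau> \<in> sigmas q \<and> \<sigma> \<in> C_set q \<tau>}"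
definition V_S_anti :: "nat \<Rightarrow> complex mat set" where
  "V_S_anti q = mat_span (4^q) {S_mat \<sigma> \<tau> | \<sigma> \<tau>. \<tau> \<in> sigmas q \<and> \<sigma> \<in> N_set q \<tau>}"
definition V_A_comm :: "nat \<Rightarrow> complex mat set" where
  "V_A_comm q = mat_span (4^q) {A_mat \<sigma> \<tau> | \<sigma> \<tau>. \<tau> \<in> sigmas q \<and> \<sigma> \<in> C_set q \<tau>}"
definition V_A_anti :: "nat \<Rightarrow> complex mat set" where
  "V_A_anti q = mat_span (4^q) {A_mat \<sigma> \<tau> | \<sigma> \<tau>. \<tau> \<in> sigmas q \<and> \<sigma> \<in> N_set q \<tau>}"

definition invariant_space :: "nat \<Rightarrow> complex mat set \<Rightarrow> bool" where
  "invariant_space q W \<longleftrightarrow> (\<forall>C \<in> clifford q. \<forall>M \<in> W. two_copy C M \<in> W)"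

end

theory Submission
  imports Defs
begin

lemma adj_dims[simp]: "dim_row (mat_adjoint A) = dim_col A" "dim_col (mat_adjoint A) = dim_row A"
  unfolding mat_adjoint_def by auto
lemma adj_index[simp]: "i < dim_col A \<Longrightarrow> j < dim_row A \<Longrightarrow> mat_adjoint A $$ (i,j) = conjugate (A $$ (j,i))"
  unfolding mat_adjoint_def by (simp add: mat_of_rows_index)
lemma adj_carrier[simp]: "A \<in> carrier_mat n m \<Longrightarrow> mat_adjoint A \<in> carrier_mat m n"
  by (metis adj_dims carrier_matD(1,2) carrier_matI)

lemma kron_dims[simp]: "dim_row (kron A B) = dim_row A * dim_row B" "dim_col (kron A B) = dim_col A * dim_col B"
  unfolding kron_def by auto
lemma kron_index: "i < dim_row A * dim_row B \<Longrightarrow> j < dim_col A * dim_col B \<Longrightarrow>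
  kron A B $$ (i,j) = A $$ (i div dim_row B, j div dim_col B) * B $$ (i mod dim_row B, j mod dim_col B)"
  unfolding kron_def by auto
lemma kron_carrier[simp]: "A \<in> carrier_mat a b \<Longrightarrow> B \<in> carrier_mat c d \<Longrightarrow> kron A B \<in> carrier_mat (a*c) (b*d)"
  by (metis kron_dims carrier_matD(1,2) carrier_matI)

lemma dm_lt: "(i::nat) < a * b \<Longrightarrow> i div b < a \<and> i mod b < b"
  by (cases "b = 0") (auto simp: less_mult_imp_div_less)
lemma dm_lt2: "(x::nat) < b \<Longrightarrow> y < d \<Longrightarrow> x*d+y < b*d"
proof -
  assume x: "x < b" and y: "y < d"
  have "x*d+y < (x+1)*d" using y by simp
  also have "\<dots> \<le> b*d" using x by (intro mult_right_mono) auto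
  finally show ?thesis .
qed

lemma sum_split_mult: "sum (g :: nat \<Rightarrow> 'a :: comm_monoid_add) {0..<b*d} = (\<Sum>x<b. \<Sum>y<d. g (x*d+y))"
proof -
  have "sum g {0..<b*d} = sum (\<lambda>(x,y). g(x*d+y)) ({..<b}\<times>{..<d})"
  proof (rule sum.reindex_bij_witness[where i="\<lambda>(x,y). x*d+y" and j="\<lambda>k. (k div d, k mod d)"])
    fix k assume "k \<in> {0..<b*d}"
    then have k: "k < b*d" by simp
    show "(case (k div d, k mod d) of (x, y) \<Rightarrow> x * d + y) = k" by simp
    show "(k div d, k mod d) \<in> {..<b} \<times> {..<d}" using dm_lt[OF k] by simp
    show "(case (k div d, k mod d) of (x, y) \<Rightarrow> g (x * d + y)) = g k" by simp
  next
    fix p assume "p \<in> {..<b} \<times> {..<d}"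
    then obtain x y where p: "p = (x,y)" "x < b" "y < d" by blast
    show "((case p of (x, y) \<Rightarrow> x * d + y) div d, (case p of (x, y) \<Rightarrow> x * d + y) mod d) = p"
      using p by simp
    show "(case p of (x, y) \<Rightarrow> x * d + y) \<in> {0..<b * d}" using p dm_lt2 by simp
  qed
  also have "\<dots> = (\<Sum>x<b. \<Sum>y<d. g (x*d+y))" by (simp add: sum.cartesian_product)
  finally show ?thesis .
qed

lemma kron_idx: assumes A: "A \<in> carrier_mat a b" and B: "B \<in> carrier_mat c d" and i': "i < a*c" and j: "j < b*d"
  shows "kron A B $$ (i,j) = A $$ (i div c, j div d) * B $$ (i mod c, j mod d)"
proof -
  have r: "dim_row A = a" "dim_col A = b" "dim_row B = c" "dim_col B = d" using A B by auto
  show ?thesis using kron_index[of i A B j] i' j unfolding r by blast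
qed

lemma kron_mult:
  assumes A: "A \<in> carrier_mat a b" and B: "B \<in> carrier_mat c d"
    and C: "C \<in> carrier_mat b e" and D: "D \<in> carrier_mat d f"
  shows "kron A B * kron C D = kron (A * C) (B * D)"
proof (rule eq_matI)
  have AC: "A * C \<in> carrier_mat a e" and BD: "B * D \<in> carrier_mat c f" using A B C D by auto
  have K1: "kron A B \<in> carrier_mat (a*c) (b*d)" and K2: "kron C D \<in> carrier_mat (b*d) (e*f)"
    and K3: "kron (A*C) (B*D) \<in> carrier_mat (a*c) (e*f)" using A B C D AC BD by auto
  show "dim_row (kron A B * kron C D) = dim_row (kron (A * C) (B * D))" using K1 K3 by simp
  show "dim_col (kron A B * kron C D) = dim_col (kron (A * C) (B * D))" using K2 K3 by simp
  fix i j assume i: "i < dim_row (kron (A * C) (B * D))" and j: "j < dim_col (kron (A * C) (B * D))"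
  have i': "i < a * c" and j': "j < e * f" using i j K3 by auto
  have id: "i div c < a" "i mod c < c" "j div f < e" "j mod f < f" using dm_lt[OF i'] dm_lt[OF j'] by auto
  have "(kron A B * kron C D) $$ (i,j) = row (kron A B) i \<bullet> col (kron C D) j"
    by (rule index_mult_mat) (use K1 K2 i' j' in auto)
  also have "\<dots> = (\<Sum>k\<in>{0..<b*d}. kron A B $$ (i,k) * kron C D $$ (k,j))"
    unfolding scalar_prod_def using carrier_matD[OF K1] carrier_matD[OF K2] i' j' by (auto intro!: sum.cong)
  also have "\<dots> = (\<Sum>x<b. \<Sum>y<d. kron A B $$ (i,x*d+y) * kron C D $$ (x*d+y,j))"
    by (rule sum_split_mult)
  also have "\<dots> = (\<Sum>x<b. \<Sum>y<d. (A $$ (i div c, x) * C $$ (x, j div f)) * (B $$ (i mod c, y) * D $$ (y, j mod f)))"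
  proof (intro sum.cong refl)
    fix x y assume x: "x \<in> {..<b}" and y: "y \<in> {..<d}"
    have xy: "x*d+y < b*d" using x y dm_lt2 by auto
    have d: "(x*d+y) div d = x" "(x*d+y) mod d = y" using y by auto
    have e1: "kron A B $$ (i,x*d+y) = A $$ (i div c, x) * B $$ (i mod c, y)"
      using kron_idx[OF A B i' xy] unfolding d .
    have e2: "kron C D $$ (x*d+y,j) = C $$ (x, j div f) * D $$ (y, j mod f)"
      using kron_idx[OF C D xy j'] unfolding d .
    show "kron A B $$ (i,x*d+y) * kron C D $$ (x*d+y,j) = (A $$ (i div c, x) * C $$ (x, j div f)) * (B $$ (i mod c, y) * D $$ (y, j mod f))"
      unfolding e1 e2 by (simp only: ac_simps)
  qed
  also have "\<dots> = (\<Sum>x<b. A $$ (i div c, x) * C $$ (x, j div f)) * (\<Sum>y<d. B $$ (i mod c, y) * D $$ (y, j mod f))"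
    by (simp only: sum_product)
  also have "(\<Sum>x<b. A $$ (i div c, x) * C $$ (x, j div f)) = (A * C) $$ (i div c, j div f)"
    using A C id by (auto simp: scalar_prod_def atLeast0LessThan)
  also have "(\<Sum>y<d. B $$ (i mod c, y) * D $$ (y, j mod f)) = (B * D) $$ (i mod c, j mod f)"
    using B D id by (auto simp: scalar_prod_def atLeast0LessThan)
  also have "(A * C) $$ (i div c, j div f) * (B * D) $$ (i mod c, j mod f) = kron (A * C) (B * D) $$ (i,j)"
    using kron_idx[OF AC BD i' j'] by simp
  finally show "(kron A B * kron C D) $$ (i,j) = kron (A * C) (B * D) $$ (i,j)" .
qed

lemma kron_adj: "mat_adjoint (kron A B) = kron (mat_adjoint A) (mat_adjoint B)"
proof (rule eq_matI)
  fix i j assume i: "i < dim_row (kron (mat_adjoint A) (mat_adjoint B))" and j: "j < dim_col (kron (mat_adjoint A) (mat_adjoint B))"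
  have i': "i < dim_col A * dim_col B" and j': "j < dim_row A * dim_row B" using i j by auto
  note a = dm_lt[OF i'] dm_lt[OF j']
  have "mat_adjoint (kron A B) $$ (i,j) = conjugate (kron A B $$ (j,i))" using i' j' by simp
  also have "\<dots> = conjugate (A $$ (j div dim_row B, i div dim_col B) * B $$ (j mod dim_row B, i mod dim_col B))"
    using kron_index[OF j' i'] by simp
  also have "\<dots> = mat_adjoint A $$ (i div dim_col B, j div dim_row B) * mat_adjoint B $$ (i mod dim_col B, j mod dim_row B)"
    using a by simp
  also have "\<dots> = kron (mat_adjoint A) (mat_adjoint B) $$ (i,j)" using kron_index[of i "mat_adjoint A" "mat_adjoint B" j] i' j' by simp
  finally show "mat_adjoint (kron A B) $$ (i,j) = kron (mat_adjoint A) (mat_adjoint B) $$ (i,j)" .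
qed auto

lemma kron_smult_l: "kron (c \<cdot>\<^sub>m A) B = c \<cdot>\<^sub>m kron A B"
proof (rule eq_matI)
  fix i j assume i: "i < dim_row (c \<cdot>\<^sub>m kron A B)" and j: "j < dim_col (c \<cdot>\<^sub>m kron A B)"
  have i': "i < dim_row A * dim_row B" and j': "j < dim_col A * dim_col B" using i j by auto
  note a = dm_lt[OF i'] dm_lt[OF j']
  have "kron (c \<cdot>\<^sub>m A) B $$ (i,j) = (c \<cdot>\<^sub>m A) $$ (i div dim_row B, j div dim_col B) * B $$ (i mod dim_row B, j mod dim_col B)"
    using kron_index[of i "c \<cdot>\<^sub>m A" B j] i' j' by simp
  also have "\<dots> = c * (A $$ (i div dim_row B, j div dim_col B) * B $$ (i mod dim_row B, j mod dim_col B))"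
    using a by simp
  also have "\<dots> = (c \<cdot>\<^sub>m kron A B) $$ (i,j)" using kron_index[OF i' j'] i' j' by simp
  finally show "kron (c \<cdot>\<^sub>m A) B $$ (i,j) = (c \<cdot>\<^sub>m kron A B) $$ (i,j)" .
qed auto
lemma kron_smult_r: "kron A (c \<cdot>\<^sub>m B) = c \<cdot>\<^sub>m kron A B"
proof (rule eq_matI)
  fix i j assume i: "i < dim_row (c \<cdot>\<^sub>m kron A B)" and j: "j < dim_col (c \<cdot>\<^sub>m kron A B)"
  have i': "i < dim_row A * dim_row B" and j': "j < dim_col A * dim_col B" using i j by auto
  note a = dm_lt[OF i'] dm_lt[OF j']
  have "kron A (c \<cdot>\<^sub>m B) $$ (i,j) = A $$ (i div dim_row B, j div dim_col B) * (c \<cdot>\<^sub>m B) $$ (i mod dim_row B, j mod dim_col B)"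
    using kron_index[of i A "c \<cdot>\<^sub>m B" j] i' j' by simp
  also have "\<dots> = c * (A $$ (i div dim_row B, j div dim_col B) * B $$ (i mod dim_row B, j mod dim_col B))"
    using a by simp
  also have "\<dots> = (c \<cdot>\<^sub>m kron A B) $$ (i,j)" using kron_index[OF i' j'] i' j' by simp
  finally show "kron A (c \<cdot>\<^sub>m B) $$ (i,j) = (c \<cdot>\<^sub>m kron A B) $$ (i,j)" .
qed auto


lemma smult_smult_mat: "c \<cdot>\<^sub>m (d \<cdot>\<^sub>m A) = (c * d) \<cdot>\<^sub>m (A :: complex mat)"
  by (rule eq_matI) auto

lemma one_smult_m[simp]: "(1::complex) \<cdot>\<^sub>m A = A"
  by (rule eq_matI) auto

lemma mat2_eq: assumes "A \<in> carrier_mat 2 2" "B \<in> carrier_mat 2 2"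
  "A $$ (0,0) = B $$ (0,0)" "A $$ (0,1) = B $$ (0,1)" "A $$ (1,0) = B $$ (1,0)" "A $$ (1,1) = B $$ (1,1)"
  shows "A = B"
proof (rule eq_matI)
  fix i j assume "i < dim_row B" "j < dim_col B"
  then have "i < 2" "j < 2" using assms by auto
  then have "i = 0 \<or> i = 1" "j = 0 \<or> j = 1" by auto
  then show "A $$ (i,j) = B $$ (i,j)" using assms by auto
qed (use assms in auto)

lemma mult2_c[simp]: "A \<in> carrier_mat 2 2 \<Longrightarrow> B \<in> carrier_mat 2 2 \<Longrightarrow> A * B \<in> carrier_mat 2 2"
  by (rule mult_carrier_mat)

lemma mult2_idx: assumes "A \<in> carrier_mat 2 2" "B \<in> carrier_mat 2 2" "i < 2" "j < 2"
  shows "(A * B) $$ (i,j) = A $$ (i,0) * B $$ (0,j) + A $$ (i,1) * B $$ (1,j)"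
proof -
  have "(A * B) $$ (i,j) = row A i \<bullet> col B j" using assms by (intro index_mult_mat) auto
  also have "\<dots> = (\<Sum>k\<in>{0..<2}. A $$ (i,k) * B $$ (k,j))" using assms by (auto simp: scalar_prod_def intro!: sum.cong)
  also have "{0..<2} = {0, 1::nat}" by auto
  finally show ?thesis by simp
qed

lemma pX_c[simp]: "pX \<in> carrier_mat 2 2" and pY_c[simp]: "pY \<in> carrier_mat 2 2" and pZ_c[simp]: "pZ \<in> carrier_mat 2 2"
  unfolding pX_def pY_def pZ_def mat_of_rows_list_def by (auto intro!: carrier_matI)

lemma pauli_dims[simp]: "dim_row pX = 2" "dim_col pX = 2" "dim_row pY = 2" "dim_col pY = 2" "dim_row pZ = 2" "dim_col pZ = 2"
  unfolding pX_def pY_def pZ_def mat_of_rows_list_def by auto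

lemma pX_idx[simp]: "pX $$ (0,0) = 0" "pX $$ (0,1) = 1" "pX $$ (1,0) = 1" "pX $$ (1,1) = 0"
  unfolding pX_def mat_of_rows_list_def by auto
lemma pY_idx[simp]: "pY $$ (0,0) = 0" "pY $$ (0,1) = -\<i>" "pY $$ (1,0) = \<i>" "pY $$ (1,1) = 0"
  unfolding pY_def mat_of_rows_list_def by auto
lemma pZ_idx[simp]: "pZ $$ (0,0) = 1" "pZ $$ (0,1) = 0" "pZ $$ (1,0) = 0" "pZ $$ (1,1) = -1"
  unfolding pZ_def mat_of_rows_list_def by auto
lemma one2_idx[simp]: "(1\<^sub>m 2 :: complex mat) $$ (0,0) = 1" "(1\<^sub>m 2 :: complex mat) $$ (0,1) = 0" 
  "(1\<^sub>m 2 :: complex mat) $$ (1,0) = 0" "(1\<^sub>m 2 :: complex mat) $$ (1,1) = 1"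
  by auto

definition P1 :: "complex mat set" where "P1 = {1\<^sub>m 2, pX, pY, pZ}"

lemmas idx_suc = pX_idx[unfolded One_nat_def] pY_idx[unfolded One_nat_def] pZ_idx[unfolded One_nat_def] one2_idx[unfolded One_nat_def]
declare idx_suc[simp]

lemma P1_c: "p \<in> P1 \<Longrightarrow> p \<in> carrier_mat 2 2" unfolding P1_def by auto


lemma P1_mult: assumes "a \<in> P1" "b \<in> P1" shows "\<exists>c. \<exists>p\<in>P1. a * b = c \<cdot>\<^sub>m p"
proof -
  have X: "pX \<in> P1" and Y: "pY \<in> P1" and Z: "pZ \<in> P1" and I: "1\<^sub>m 2 \<in> P1" unfolding P1_def by auto
  have "pX * pX = 1 \<cdot>\<^sub>m 1\<^sub>m 2" by (rule mat2_eq; simp add: mult2_idx del: index_mult_mat)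
  moreover have "pY * pY = 1 \<cdot>\<^sub>m 1\<^sub>m 2" by (rule mat2_eq; simp add: mult2_idx del: index_mult_mat)
  moreover have "pZ * pZ = 1 \<cdot>\<^sub>m 1\<^sub>m 2" by (rule mat2_eq; simp add: mult2_idx del: index_mult_mat)
  moreover have "pX * pY = \<i> \<cdot>\<^sub>m pZ" by (rule mat2_eq; simp add: mult2_idx del: index_mult_mat)
  moreover have "pY * pX = -\<i> \<cdot>\<^sub>m pZ" by (rule mat2_eq; simp add: mult2_idx del: index_mult_mat)
  moreover have "pY * pZ = \<i> \<cdot>\<^sub>m pX" by (rule mat2_eq; simp add: mult2_idx del: index_mult_mat)
  moreover have "pZ * pY = -\<i> \<cdot>\<^sub>m pX" by (rule mat2_eq; simp add: mult2_idx del: index_mult_mat)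
  moreover have "pZ * pX = \<i> \<cdot>\<^sub>m pY" by (rule mat2_eq; simp add: mult2_idx del: index_mult_mat)
  moreover have "pX * pZ = -\<i> \<cdot>\<^sub>m pY" by (rule mat2_eq; simp add: mult2_idx del: index_mult_mat)
  moreover have "\<And>p. p \<in> P1 \<Longrightarrow> 1\<^sub>m 2 * p = 1 \<cdot>\<^sub>m p" using P1_c left_mult_one_mat by auto
  moreover have "\<And>p. p \<in> P1 \<Longrightarrow> p * 1\<^sub>m 2 = 1 \<cdot>\<^sub>m p" using P1_c right_mult_one_mat by auto
  ultimately have facts: "pX * pX = 1 \<cdot>\<^sub>m 1\<^sub>m 2" "pY * pY = 1 \<cdot>\<^sub>m 1\<^sub>m 2" "pZ * pZ = 1 \<cdot>\<^sub>m 1\<^sub>m 2"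
    "pX * pY = \<i> \<cdot>\<^sub>m pZ" "pY * pX = -\<i> \<cdot>\<^sub>m pZ" "pY * pZ = \<i> \<cdot>\<^sub>m pX" "pZ * pY = -\<i> \<cdot>\<^sub>m pX"
    "pZ * pX = \<i> \<cdot>\<^sub>m pY" "pX * pZ = -\<i> \<cdot>\<^sub>m pY"
    "\<And>p. p \<in> P1 \<Longrightarrow> 1\<^sub>m 2 * p = 1 \<cdot>\<^sub>m p" "\<And>p. p \<in> P1 \<Longrightarrow> p * 1\<^sub>m 2 = 1 \<cdot>\<^sub>m p" by blast+
  have cases: "a = 1\<^sub>m 2 \<or> a = pX \<or> a = pY \<or> a = pZ" "b = 1\<^sub>m 2 \<or> b = pX \<or> b = pY \<or> b = pZ"
    using assms unfolding P1_def by auto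
  show ?thesis
    using cases
    apply (elim disjE)
    apply (use facts X Y Z I assms in \<open>blast+\<close>)
    done
qed


lemma tps_mono: "S \<subseteq> T \<Longrightarrow> tensor_power_set S q \<subseteq> tensor_power_set T q"
  by (induction q) auto

lemma strings_P1: "pauli_strings q = tensor_power_set P1 q"
  unfolding pauli_strings_def P1_def by simp

lemma strings_Suc: "P \<in> pauli_strings (Suc q) \<Longrightarrow> \<exists>a B. P = kron a B \<and> a \<in> P1 \<and> B \<in> pauli_strings q"
  unfolding strings_P1 by auto

lemma strings_SucI: "a \<in> P1 \<Longrightarrow> B \<in> pauli_strings q \<Longrightarrow> kron a B \<in> pauli_strings (Suc q)"
  unfolding strings_P1 by auto

lemma strings_carrier: "P \<in> pauli_strings q \<Longrightarrow> P \<in> carrier_mat (2^q) (2^q)"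
proof (induction q arbitrary: P)
  case 0
  then show ?case unfolding strings_P1 by auto
next
  case (Suc q)
  then obtain a B where P: "P = kron a B" "a \<in> P1" "B \<in> pauli_strings q" using strings_Suc by blast
  have "kron a B \<in> carrier_mat (2 * 2^q) (2 * 2^q)" using P1_c[OF P(2)] Suc.IH[OF P(3)] by (rule kron_carrier)
  then show ?case using P by simp
qed

lemma pY_prod: "pY = (\<i> \<cdot>\<^sub>m 1\<^sub>m 2) * (pX * pZ)"
  by (rule mat2_eq; simp add: mult2_idx del: index_mult_mat)

lemma P1_group: "P1 \<subseteq> pauli1_group"
proof -
  have "pY \<in> pauli1_group" by (subst pY_prod) (intro pauli1_group.mult pauli1_group.geni pauli1_group.genX pauli1_group.genZ)
  then show ?thesis unfolding P1_def using pauli1_group.intros by auto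
qed

lemma strings_group: "pauli_strings q \<subseteq> pauli_group q"
  unfolding strings_P1 pauli_group_def by (rule tps_mono[OF P1_group])

lemma group1_decomp: "g \<in> pauli1_group \<Longrightarrow> \<exists>c. \<exists>p\<in>P1. g = c \<cdot>\<^sub>m p"
proof (induction rule: pauli1_group.induct)
  case one
  then show ?case unfolding P1_def by (intro exI[of _ 1] bexI[of _ "1\<^sub>m 2"]) auto
next
  case genX
  then show ?case unfolding P1_def by (intro exI[of _ 1] bexI[of _ "pX"]) auto
next
  case genZ
  then show ?case unfolding P1_def by (intro exI[of _ 1] bexI[of _ "pZ"]) auto
next
  case geni
  then show ?case unfolding P1_def by (intro exI[of _ \<i>] bexI[of _ "1\<^sub>m 2"]) auto
next
  case (mult a b)
  then obtain c p d p' where cp: "p \<in> P1" "a = c \<cdot>\<^sub>m p" "p' \<in> P1" "b = d \<cdot>\<^sub>m p'" by blast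
  obtain e p'' where e: "p'' \<in> P1" "p * p' = e \<cdot>\<^sub>m p''" using P1_mult[OF cp(1,3)] by blast
  have pc: "p \<in> carrier_mat 2 2" "p' \<in> carrier_mat 2 2" using cp P1_c by auto
  have "a * b = (c \<cdot>\<^sub>m p) * (d \<cdot>\<^sub>m p')" using cp by simp
  also have "\<dots> = c \<cdot>\<^sub>m (p * (d \<cdot>\<^sub>m p'))" using pc by (intro mult_smult_assoc_mat) auto
  also have "p * (d \<cdot>\<^sub>m p') = d \<cdot>\<^sub>m (p * p')" using pc by (intro mult_smult_distrib) auto
  also have "c \<cdot>\<^sub>m (d \<cdot>\<^sub>m (p * p')) = (c * d * e) \<cdot>\<^sub>m p''" unfolding e(2) smult_smult_mat by (simp add: ac_simps)
  finally show ?case using e(1) by blast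
qed

lemma group_decomp: "G \<in> pauli_group q \<Longrightarrow> \<exists>c. \<exists>P\<in>pauli_strings q. G = c \<cdot>\<^sub>m P"
proof (induction q arbitrary: G)
  case 0
  then show ?case unfolding pauli_group_def strings_P1 by (intro exI[of _ 1] bexI[of _ "1\<^sub>m 1"]) auto
next
  case (Suc q)
  then obtain a B where G: "G = kron a B" "a \<in> pauli1_group" "B \<in> pauli_group q" unfolding pauli_group_def by auto
  obtain c p where cp: "p \<in> P1" "a = c \<cdot>\<^sub>m p" using group1_decomp[OF G(2)] by blast
  obtain d P where dP: "P \<in> pauli_strings q" "B = d \<cdot>\<^sub>m P" using Suc.IH[OF G(3)] by blast
  have "G = (c * d) \<cdot>\<^sub>m kron p P" unfolding G(1) cp(2) dP(2) kron_smult_l kron_smult_r smult_smult_mat by (simp add: mult.commute)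
  then show ?case using strings_SucI[OF cp(1) dP(1)] by blast
qed

lemma kron_one: "kron (1\<^sub>m a) (1\<^sub>m b) = (1\<^sub>m (a*b) :: complex mat)"
proof (rule eq_matI)
  fix i j assume i: "i < dim_row (1\<^sub>m (a*b) :: complex mat)" and j: "j < dim_col (1\<^sub>m (a*b) :: complex mat)"
  have i': "i < dim_row (1\<^sub>m a :: complex mat) * dim_row (1\<^sub>m b :: complex mat)" and j': "j < dim_col (1\<^sub>m a :: complex mat) * dim_col (1\<^sub>m b :: complex mat)"
    using i j by auto
  note d = dm_lt[of i a b] dm_lt[of j a b]
  have "kron (1\<^sub>m a) (1\<^sub>m b) $$ (i,j) = (1\<^sub>m a :: complex mat) $$ (i div b, j div b) * (1\<^sub>m b :: complex mat) $$ (i mod b, j mod b)"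
    using kron_index[OF i' j'] by simp
  also have "\<dots> = (if i div b = j div b \<and> i mod b = j mod b then 1 else 0)"
    using d i j by auto
  also have "(i div b = j div b \<and> i mod b = j mod b) = (i = j)"
    by (metis div_mult_mod_eq)
  finally show "kron (1\<^sub>m a) (1\<^sub>m b) $$ (i,j) = (1\<^sub>m (a*b) :: complex mat) $$ (i,j)" using i j by simp
qed auto

lemma one_string: "(1\<^sub>m (2^q) :: complex mat) \<in> pauli_strings q"
proof (induction q)
  case 0
  then show ?case unfolding strings_P1 by simp
next
  case (Suc q)
  have "kron (1\<^sub>m 2) (1\<^sub>m (2^q)) \<in> pauli_strings (Suc q)" using Suc by (intro strings_SucI) (auto simp: P1_def)
  then show ?case unfolding kron_one by simp
qed

lemma P1_nz: "a \<in> P1 \<Longrightarrow> \<exists>i<2. \<exists>j<2. a $$ (i,j) \<noteq> 0"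
  unfolding P1_def
  apply (elim insertE)
  apply (rule exI[of _ 0], simp, rule exI[of _ 0], simp)
  apply (rule exI[of _ 0], simp, rule exI[of _ 1], simp)
  apply (rule exI[of _ 0], simp, rule exI[of _ 1], simp)
  apply (rule exI[of _ 0], simp, rule exI[of _ 0], simp)
  apply simp
  done

lemma kron_entry: assumes "a \<in> carrier_mat 2 2" "B \<in> carrier_mat n n" "i0 < 2" "j0 < 2" "i1 < n" "j1 < n"
  shows "kron a B $$ (i0*n+i1, j0*n+j1) = a $$ (i0,j0) * B $$ (i1,j1)"
proof -
  have i: "i0*n+i1 < 2*n" and j: "j0*n+j1 < 2*n" using assms dm_lt2 by auto
  have d: "(i0*n+i1) div n = i0" "(i0*n+i1) mod n = i1" "(j0*n+j1) div n = j0" "(j0*n+j1) mod n = j1"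
    using assms by auto
  show ?thesis using kron_idx[OF assms(1,2) i j] unfolding d .
qed

lemma strings_nz: "P \<in> pauli_strings q \<Longrightarrow> \<exists>i<2^q. \<exists>j<2^q. P $$ (i,j) \<noteq> 0"
proof (induction q arbitrary: P)
  case 0
  then show ?case unfolding strings_P1 by auto
next
  case (Suc q)
  then obtain a B where P: "P = kron a B" "a \<in> P1" "B \<in> pauli_strings q" using strings_Suc by blast
  obtain i0 j0 where a: "i0 < 2" "j0 < 2" "a $$ (i0,j0) \<noteq> 0" using P1_nz[OF P(2)] by blast
  obtain i1 j1 where b: "i1 < 2^q" "j1 < 2^q" "B $$ (i1,j1) \<noteq> 0" using Suc.IH[OF P(3)] by blast
  have e: "P $$ (i0*2^q+i1, j0*2^q+j1) = a $$ (i0,j0) * B $$ (i1,j1)"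
    unfolding P(1) using P1_c[OF P(2)] strings_carrier[OF P(3)] a b by (intro kron_entry)
  have "i0*2^q+i1 < 2*2^q" "j0*2^q+j1 < 2*2^q" using a b dm_lt2 by auto
  then show ?case using e a b by (intro exI[of _ "i0*2^q+i1"] conjI exI[of _ "j0*2^q+j1"]) auto
qed



lemma strings_unique: "P \<in> pauli_strings q \<Longrightarrow> Q \<in> pauli_strings q \<Longrightarrow> P = c \<cdot>\<^sub>m Q \<Longrightarrow> c = 1"
proof (induction q arbitrary: P Q c)
  case 0
  then have "P = 1\<^sub>m 1" "Q = 1\<^sub>m 1" unfolding strings_P1 by auto
  then have "P $$ (0,0) = 1" "(c \<cdot>\<^sub>m Q) $$ (0,0) = c" by auto
  then show ?case using 0 by simp
next
  case (Suc q)
  define n where "n = (2::nat)^q"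
  obtain a B where P: "P = kron a B" "a \<in> P1" "B \<in> pauli_strings q" using strings_Suc Suc.prems(1) by blast
  obtain a' B' where Q: "Q = kron a' B'" "a' \<in> P1" "B' \<in> pauli_strings q" using strings_Suc Suc.prems(2) by blast
  have ac: "a \<in> carrier_mat 2 2" "a' \<in> carrier_mat 2 2" using P Q P1_c by auto
  have Bc: "B \<in> carrier_mat n n" "B' \<in> carrier_mat n n" using P Q strings_carrier n_def by auto
  have Qc: "Q \<in> carrier_mat (2*n) (2*n)" using Q ac Bc by simp
  have ent: "a $$ (i0,j0) * B $$ (i1,j1) = c * (a' $$ (i0,j0) * B' $$ (i1,j1))"
    if "i0 < 2" "j0 < 2" "i1 < n" "j1 < n" for i0 j0 i1 j1
  proof -
    have i: "i0*n+i1 < 2*n" and j: "j0*n+j1 < 2*n" using that dm_lt2 by auto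
    have "a $$ (i0,j0) * B $$ (i1,j1) = P $$ (i0*n+i1, j0*n+j1)"
      unfolding P(1) using ac Bc that by (intro kron_entry[symmetric])
    also have "\<dots> = c * Q $$ (i0*n+i1, j0*n+j1)" using Suc.prems(3) i j Qc by simp
    also have "Q $$ (i0*n+i1, j0*n+j1) = a' $$ (i0,j0) * B' $$ (i1,j1)"
      unfolding Q(1) using ac Bc that by (intro kron_entry)
    finally show ?thesis .
  qed
  obtain k l where kl: "k < n" "l < n" "B' $$ (k,l) \<noteq> 0" using strings_nz[OF Q(3)] n_def by blast
  have enta: "a $$ (i0,j0) = c * a' $$ (i0,j0)" if ij: "i0 < 2" "j0 < 2" for i0 j0
  proof (cases "a $$ (i0,j0) = 0")
    case True
    have "0 = c * (a' $$ (i0,j0) * B' $$ (k,l))" using ent[OF ij kl(1,2)] True by simp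
    then show ?thesis using True kl(3) by simp
  next
    case False
    define r where "r = c * a' $$ (i0,j0) / a $$ (i0,j0)"
    have "B = r \<cdot>\<^sub>m B'"
    proof (rule eq_matI)
      fix i j assume "i < dim_row (r \<cdot>\<^sub>m B')" "j < dim_col (r \<cdot>\<^sub>m B')"
      then have ij': "i < n" "j < n" using Bc by auto
      have "B $$ (i,j) = r * B' $$ (i,j)" using ent[OF ij ij'] False unfolding r_def by (simp add: field_simps)
      then show "B $$ (i,j) = (r \<cdot>\<^sub>m B') $$ (i,j)" using ij' Bc by simp
    qed (use Bc in auto)
    then have "r = 1" using Suc.IH[OF P(3) Q(3)] by blast
    then show ?thesis using False unfolding r_def by (simp add: field_simps)
  qed
  have e: "a $$ (0,0) = c * a' $$ (0,0)" "a $$ (0,Suc 0) = c * a' $$ (0,Suc 0)"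
    "a $$ (Suc 0,0) = c * a' $$ (Suc 0,0)" "a $$ (Suc 0,Suc 0) = c * a' $$ (Suc 0,Suc 0)"
    using enta by auto
  have cases: "a = 1\<^sub>m 2 \<or> a = pX \<or> a = pY \<or> a = pZ" "a' = 1\<^sub>m 2 \<or> a' = pX \<or> a' = pY \<or> a' = pZ"
    using P(2) Q(2) unfolding P1_def by auto
  show ?case using cases e by (elim disjE) auto
qed



lemma mult_cn[simp]: "A \<in> carrier_mat n n \<Longrightarrow> B \<in> carrier_mat n n \<Longrightarrow> A * B \<in> carrier_mat n n"
  by (rule mult_carrier_mat)

definition phi :: "complex mat \<Rightarrow> complex mat \<Rightarrow> complex mat" where
  "phi C M = C * M * mat_adjoint C"

lemma smult_cancel: "(c::complex) \<noteq> 0 \<Longrightarrow> c \<cdot>\<^sub>m A = c \<cdot>\<^sub>m B \<Longrightarrow> A = B"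
  by (metis smult_smult_mat one_smult_m divide_complex_def nonzero_divide_eq_eq)

lemma smult_add_m: "A \<in> carrier_mat n m \<Longrightarrow> B \<in> carrier_mat n m \<Longrightarrow> (c::complex) \<cdot>\<^sub>m (A + B) = c \<cdot>\<^sub>m A + c \<cdot>\<^sub>m B"
  by (rule eq_matI) (auto simp: algebra_simps)
lemma smult_minus_m: "A \<in> carrier_mat n m \<Longrightarrow> B \<in> carrier_mat n m \<Longrightarrow> (c::complex) \<cdot>\<^sub>m (A - B) = c \<cdot>\<^sub>m A - c \<cdot>\<^sub>m B"
  by (rule eq_matI) (auto simp: algebra_simps)

context
  fixes C :: "complex mat" and n :: nat
  assumes U: "unitary_mat n C"
begin

lemma Cc: "C \<in> carrier_mat n n" and Ca: "mat_adjoint C \<in> carrier_mat n n"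
  and CaC: "mat_adjoint C * C = 1\<^sub>m n" and CCa: "C * mat_adjoint C = 1\<^sub>m n"
  using U unfolding unitary_mat_def by auto

lemma phi_c: "M \<in> carrier_mat n n \<Longrightarrow> phi C M \<in> carrier_mat n n"
  unfolding phi_def using Cc Ca by auto

lemma phi_inv: assumes M: "M \<in> carrier_mat n n" shows "mat_adjoint C * phi C M * C = M"
proof -
  have "mat_adjoint C * phi C M * C = mat_adjoint C * (C * M * mat_adjoint C) * C" unfolding phi_def ..
  also have "\<dots> = (mat_adjoint C * C) * M * (mat_adjoint C * C)"
    using Cc Ca M by (simp add: assoc_mult_mat[of _ n n _ n _ n])
  also have "\<dots> = M" unfolding CaC using M by simp
  finally show ?thesis .
qed

lemma phi_eq_smult: assumes M: "M \<in> carrier_mat n n" and N: "N \<in> carrier_mat n n"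
  and e: "phi C M = c \<cdot>\<^sub>m phi C N" shows "M = c \<cdot>\<^sub>m N"
proof -
  have "M = mat_adjoint C * (c \<cdot>\<^sub>m phi C N) * C" using phi_inv[OF M] e by simp
  also have "\<dots> = c \<cdot>\<^sub>m (mat_adjoint C * phi C N * C)"
    using Ca Cc phi_c[OF N] by (simp add: mult_smult_distrib[of _ n n _ n] mult_smult_assoc_mat[of _ n n _ n])
  also have "\<dots> = c \<cdot>\<^sub>m N" using phi_inv[OF N] by simp
  finally show ?thesis .
qed

lemma phi_smult: "M \<in> carrier_mat n n \<Longrightarrow> phi C (c \<cdot>\<^sub>m M) = c \<cdot>\<^sub>m phi C M"
  unfolding phi_def using Cc Ca by (simp add: mult_smult_distrib[of _ n n _ n] mult_smult_assoc_mat[of _ n n _ n])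

lemma phi_one: "phi C (1\<^sub>m n) = 1\<^sub>m n"
  unfolding phi_def using Cc CCa by simp

lemma phi_mult: assumes A: "A \<in> carrier_mat n n" and B: "B \<in> carrier_mat n n"
  shows "phi C (A * B) = phi C A * phi C B"
proof -
  have "phi C A * phi C B = C * A * (mat_adjoint C * C) * B * mat_adjoint C"
    unfolding phi_def using A B Cc Ca by (simp add: assoc_mult_mat[of _ n n _ n _ n])
  also have "\<dots> = phi C (A * B)" unfolding CaC phi_def using A B Cc Ca by (simp add: assoc_mult_mat[of _ n n _ n _ n])
  finally show ?thesis ..
qed

lemma phi_add: assumes A: "A \<in> carrier_mat n n" and B: "B \<in> carrier_mat n n"
  shows "phi C (A + B) = phi C A + phi C B"
  unfolding phi_def mult_add_distrib_mat[OF Cc A B] add_mult_distrib_mat[OF mult_cn[OF Cc A] mult_cn[OF Cc B] Ca] ..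

lemma phi_zero: "phi C (0\<^sub>m n n) = 0\<^sub>m n n"
  unfolding phi_def using Cc Ca by simp

end



abbreviation sc :: "nat \<Rightarrow> complex" where "sc q \<equiv> complex_of_real (1 / sqrt (2^q))"

lemma sc_nz: "sc q \<noteq> 0" by simp

lemma sigmas_E: "\<sigma> \<in> sigmas q \<Longrightarrow> \<exists>P. P \<in> pauli_strings q \<and> P \<noteq> 1\<^sub>m (2^q) \<and> \<sigma> = sc q \<cdot>\<^sub>m P"
  unfolding sigmas_def by auto

lemma sigmas_I: "P \<in> pauli_strings q \<Longrightarrow> P \<noteq> 1\<^sub>m (2^q) \<Longrightarrow> sc q \<cdot>\<^sub>m P \<in> sigmas q"
  unfolding sigmas_def by auto

lemma sig_c: "\<sigma> \<in> sigmas q \<Longrightarrow> \<sigma> \<in> carrier_mat (2^q) (2^q)"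
  using sigmas_E strings_carrier by fastforce

lemma smult_comm_m: "c \<cdot>\<^sub>m (d \<cdot>\<^sub>m A) = d \<cdot>\<^sub>m (c \<cdot>\<^sub>m (A :: complex mat))"
  unfolding smult_smult_mat by (simp add: mult.commute)

lemma sig_unique: assumes "\<sigma> \<in> sigmas q" "\<tau> \<in> sigmas q" "\<sigma> = c \<cdot>\<^sub>m \<tau>" shows "c = 1"
proof -
  obtain P where P: "P \<in> pauli_strings q" "\<sigma> = sc q \<cdot>\<^sub>m P" using sigmas_E[OF assms(1)] by blast
  obtain Q where Q: "Q \<in> pauli_strings q" "\<tau> = sc q \<cdot>\<^sub>m Q" using sigmas_E[OF assms(2)] by blast
  have "sc q \<cdot>\<^sub>m P = sc q \<cdot>\<^sub>m (c \<cdot>\<^sub>m Q)" using assms(3) P Q smult_comm_m by metis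
  then have "P = c \<cdot>\<^sub>m Q" using smult_cancel sc_nz by blast
  then show ?thesis using strings_unique P Q by blast
qed

lemma zero_smult_c: "M \<in> carrier_mat n m \<Longrightarrow> (0::complex) \<cdot>\<^sub>m M = 0\<^sub>m n m"
  by (rule eq_matI) auto

lemma mult_smult_both: "A \<in> carrier_mat n n \<Longrightarrow> B \<in> carrier_mat n n \<Longrightarrow> (a \<cdot>\<^sub>m A) * (b \<cdot>\<^sub>m B) = (a * b) \<cdot>\<^sub>m (A * (B :: complex mat))"
  by (simp add: mult_smult_distrib[of _ n n _ n] mult_smult_assoc_mat[of _ n n _ n] smult_smult_mat mult.commute)

lemma cliff_act: assumes C: "C \<in> clifford q" and s: "\<sigma> \<in> sigmas q"
  shows "\<exists>a \<sigma>'. \<sigma>' \<in> sigmas q \<and> a \<noteq> 0 \<and> phi C \<sigma> = a \<cdot>\<^sub>m \<sigma>'"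
proof -
  define n where "n = (2::nat)^q"
  have U: "unitary_mat n C" using C unfolding clifford_def n_def by auto
  obtain P where P: "P \<in> pauli_strings q" "P \<noteq> 1\<^sub>m n" "\<sigma> = sc q \<cdot>\<^sub>m P" using sigmas_E[OF s] n_def by blast
  have Pc: "P \<in> carrier_mat n n" using strings_carrier[OF P(1)] n_def by simp
  have "phi C P \<in> pauli_group q" using C strings_group P(1) unfolding clifford_def phi_def by auto
  then obtain c P' where P': "P' \<in> pauli_strings q" "phi C P = c \<cdot>\<^sub>m P'" using group_decomp by blast
  have P'c: "P' \<in> carrier_mat n n" using strings_carrier[OF P'(1)] n_def by simp
  have e: "phi C \<sigma> = c \<cdot>\<^sub>m (sc q \<cdot>\<^sub>m P')"
    unfolding P(3) phi_smult[OF U Pc] P'(2) by (rule smult_comm_m)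
  have cnz: "c \<noteq> 0"
  proof
    assume c0: "c = 0"
    have "phi C P = 0 \<cdot>\<^sub>m phi C P" using P'(2) c0 zero_smult_c[OF P'c] zero_smult_c[OF phi_c[OF U Pc]] by simp
    then have "P = 0 \<cdot>\<^sub>m P" using phi_eq_smult[OF U Pc Pc] by blast
    then have "P = 0\<^sub>m n n" using zero_smult_c[OF Pc] by simp
    then show False using strings_nz[OF P(1)] n_def by auto
  qed
  have P'1: "P' \<noteq> 1\<^sub>m n"
  proof
    assume "P' = 1\<^sub>m n"
    then have "phi C P = c \<cdot>\<^sub>m phi C (1\<^sub>m n)" using P'(2) phi_one[OF U] by simp
    then have "P = c \<cdot>\<^sub>m 1\<^sub>m n" using phi_eq_smult[OF U Pc] by auto
    moreover have "c = 1" using strings_unique[OF P(1) one_string] calculation n_def by blast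
    ultimately show False using P(2) by simp
  qed
  show ?thesis using e cnz sigmas_I[OF P'(1)] P'1 n_def by blast
qed

lemma cliff_unitary: "C \<in> clifford q \<Longrightarrow> unitary_mat (2^q) C"
  unfolding clifford_def by auto

context
  fixes C q \<sigma> \<tau> \<sigma>' \<tau>' a b
  assumes C: "C \<in> clifford q" and s: "\<sigma> \<in> sigmas q" "\<tau> \<in> sigmas q" "\<sigma>' \<in> sigmas q" "\<tau>' \<in> sigmas q"
    and ab: "a \<noteq> 0" "b \<noteq> 0" and ps: "phi C \<sigma> = a \<cdot>\<^sub>m \<sigma>'" and pt: "phi C \<tau> = b \<cdot>\<^sub>m \<tau>'"
begin

lemma cl_noteq: "\<sigma> \<noteq> \<tau> \<Longrightarrow> \<sigma>' \<noteq> \<tau>'"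
proof
  assume ne: "\<sigma> \<noteq> \<tau>" and eq: "\<sigma>' = \<tau>'"
  have "phi C \<sigma> = (a / b) \<cdot>\<^sub>m phi C \<tau>" unfolding ps pt eq smult_smult_mat using ab by simp
  then have "\<sigma> = (a / b) \<cdot>\<^sub>m \<tau>" using phi_eq_smult[OF cliff_unitary[OF C] sig_c[OF s(1)] sig_c[OF s(2)]] by blast
  moreover then have "a / b = 1" using sig_unique s by blast
  ultimately show False using ne by simp
qed

lemma cl_mult: "phi C (\<sigma> * \<tau>) = (a * b) \<cdot>\<^sub>m (\<sigma>' * \<tau>')" "phi C (\<tau> * \<sigma>) = (a * b) \<cdot>\<^sub>m (\<tau>' * \<sigma>')"
  using phi_mult[OF cliff_unitary[OF C] sig_c[OF s(1)] sig_c[OF s(2)]]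
    phi_mult[OF cliff_unitary[OF C] sig_c[OF s(2)] sig_c[OF s(1)]] ps pt
    mult_smult_both[OF sig_c[OF s(3)] sig_c[OF s(4)]] mult_smult_both[OF sig_c[OF s(4)] sig_c[OF s(3)]]
  by (auto simp: mult.commute)

lemma cl_comm: "\<sigma> * \<tau> = \<tau> * \<sigma> \<Longrightarrow> \<sigma>' * \<tau>' = \<tau>' * \<sigma>'"
  using cl_mult smult_cancel ab by (metis mult_eq_0_iff)

lemma cl_anti: assumes "\<sigma> * \<tau> + \<tau> * \<sigma> = 0\<^sub>m (2^q) (2^q)" shows "\<sigma>' * \<tau>' + \<tau>' * \<sigma>' = 0\<^sub>m (2^q) (2^q)"
proof -
  have c: "\<sigma> * \<tau> \<in> carrier_mat (2^q) (2^q)" "\<tau> * \<sigma> \<in> carrier_mat (2^q) (2^q)"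
    "\<sigma>' * \<tau>' \<in> carrier_mat (2^q) (2^q)" "\<tau>' * \<sigma>' \<in> carrier_mat (2^q) (2^q)"
    using sig_c s by auto
  have "0\<^sub>m (2^q) (2^q) = phi C (\<sigma> * \<tau> + \<tau> * \<sigma>)" using assms phi_zero[OF cliff_unitary[OF C]] by simp
  also have "\<dots> = (a * b) \<cdot>\<^sub>m (\<sigma>' * \<tau>') + (a * b) \<cdot>\<^sub>m (\<tau>' * \<sigma>')"
    using phi_add[OF cliff_unitary[OF C] c(1,2)] cl_mult by simp
  also have "\<dots> = (a * b) \<cdot>\<^sub>m (\<sigma>' * \<tau>' + \<tau>' * \<sigma>')" using smult_add_m[OF c(3,4)] by simp
  finally have "(a * b) \<cdot>\<^sub>m (\<sigma>' * \<tau>' + \<tau>' * \<sigma>') = (a * b) \<cdot>\<^sub>m 0\<^sub>m (2^q) (2^q)" by (metis smult_zero_mat)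
  then show ?thesis using smult_cancel ab by (metis mult_eq_0_iff)
qed

end



lemma four_pow: "(4::nat)^q = 2^q * 2^q"
  by (simp add: power_mult_distrib[symmetric])

lemma kron_unitary: assumes U: "unitary_mat n C" shows "unitary_mat (n*n) (kron C C)"
proof -
  have Cc: "C \<in> carrier_mat n n" and Ca: "mat_adjoint C \<in> carrier_mat n n"
    and CaC: "mat_adjoint C * C = 1\<^sub>m n" and CCa: "C * mat_adjoint C = 1\<^sub>m n"
    using U unfolding unitary_mat_def by auto
  have "mat_adjoint (kron C C) * kron C C = kron (mat_adjoint C * C) (mat_adjoint C * C)"
    unfolding kron_adj by (rule kron_mult[OF Ca Ca Cc Cc])
  also have "\<dots> = 1\<^sub>m (n*n)" unfolding CaC kron_one ..
  finally have 1: "mat_adjoint (kron C C) * kron C C = 1\<^sub>m (n*n)" .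
  have "kron C C * mat_adjoint (kron C C) = kron (C * mat_adjoint C) (C * mat_adjoint C)"
    unfolding kron_adj by (rule kron_mult[OF Cc Cc Ca Ca])
  also have "\<dots> = 1\<^sub>m (n*n)" unfolding CCa kron_one ..
  finally have 2: "kron C C * mat_adjoint (kron C C) = 1\<^sub>m (n*n)" .
  show ?thesis unfolding unitary_mat_def using 1 2 Cc by auto
qed

lemma tc_phi: "two_copy C M = phi (kron C C) M"
  unfolding two_copy_def phi_def ..

lemma phi_minus: assumes U: "unitary_mat n C" and A: "A \<in> carrier_mat n n" and B: "B \<in> carrier_mat n n"
  shows "phi C (A - B) = phi C A - phi C B"
proof -
  have Cc: "C \<in> carrier_mat n n" and Ca: "mat_adjoint C \<in> carrier_mat n n" using U unfolding unitary_mat_def by auto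
  show ?thesis
    unfolding phi_def mult_minus_distrib_mat[OF Cc A B] minus_mult_distrib_mat[OF mult_cn[OF Cc A] mult_cn[OF Cc B] Ca] ..
qed

lemma tc_kron: assumes U: "unitary_mat n C" and A: "A \<in> carrier_mat n n" and B: "B \<in> carrier_mat n n"
  shows "two_copy C (kron A B) = kron (phi C A) (phi C B)"
proof -
  have Cc: "C \<in> carrier_mat n n" and Ca: "mat_adjoint C \<in> carrier_mat n n" using U unfolding unitary_mat_def by auto
  have "two_copy C (kron A B) = kron (C * A) (C * B) * kron (mat_adjoint C) (mat_adjoint C)"
    unfolding two_copy_def kron_adj kron_mult[OF Cc Cc A B] ..
  also have "\<dots> = kron (phi C A) (phi C B)" unfolding phi_def
    using mult_cn[OF Cc A] mult_cn[OF Cc B] Ca Ca by (rule kron_mult)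
  finally show ?thesis .
qed

lemma span_carrier: assumes S: "S \<subseteq> carrier_mat N N" and x: "x \<in> mat_span N S" shows "x \<in> carrier_mat N N"
  using x by (induction rule: mat_span.induct) (use S in auto)

lemma span_closed: assumes S: "S \<subseteq> carrier_mat N N"
  and addf: "\<And>x y. x \<in> carrier_mat N N \<Longrightarrow> y \<in> carrier_mat N N \<Longrightarrow> f (x + y) = f x + f y"
  and smf: "\<And>c x. x \<in> carrier_mat N N \<Longrightarrow> f (c \<cdot>\<^sub>m x) = c \<cdot>\<^sub>m f x"
  and z: "f (0\<^sub>m N N) = 0\<^sub>m N N"
  and g: "\<And>s. s \<in> S \<Longrightarrow> f s \<in> mat_span N S"
  and x: "x \<in> mat_span N S"
  shows "f x \<in> mat_span N S"
  using x
proof (induction rule: mat_span.induct)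
  case zero
  then show ?case using z mat_span.zero by simp
next
  case (gen x)
  then show ?case using g by blast
next
  case (add x y)
  then show ?case using addf[OF span_carrier[OF S add.hyps(1)] span_carrier[OF S add.hyps(2)]] mat_span.add by simp
next
  case (smult x c)
  then show ?case using smf[OF span_carrier[OF S smult.hyps(1)]] mat_span.smult by simp
qed

lemma span_inv: assumes S: "S \<subseteq> carrier_mat (2^q * 2^q) (2^q * 2^q)"
  and g: "\<And>C s. C \<in> clifford q \<Longrightarrow> s \<in> S \<Longrightarrow> two_copy C s \<in> mat_span (2^q * 2^q) S"
  shows "invariant_space q (mat_span (4^q) S)"
  unfolding invariant_space_def four_pow
proof (intro ballI)
  fix C M assume C: "C \<in> clifford q" and M: "M \<in> mat_span (2^q * 2^q) S"
  have U: "unitary_mat (2^q * 2^q) (kron C C)" using kron_unitary cliff_unitary[OF C] by blast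
  show "two_copy C M \<in> mat_span (2^q * 2^q) S"
    unfolding tc_phi
    by (rule span_closed[OF S phi_add[OF U] phi_smult[OF U] phi_zero[OF U] _ M])
       (use g[OF C] tc_phi in auto)
qed



lemma kron_sc: "kron (a \<cdot>\<^sub>m A) (b \<cdot>\<^sub>m B) = (a * b) \<cdot>\<^sub>m kron A B"
  unfolding kron_smult_l kron_smult_r smult_smult_mat by (simp add: mult.commute)

lemma kron_sc2: "kron (b \<cdot>\<^sub>m B) (a \<cdot>\<^sub>m A) = (a * b) \<cdot>\<^sub>m kron B A"
  unfolding kron_smult_l kron_smult_r smult_smult_mat by (simp add: mult.commute)

lemma tc_pair: assumes C: "C \<in> clifford q" and s: "\<sigma> \<in> sigmas q" "\<tau> \<in> sigmas q" "\<sigma>' \<in> sigmas q" "\<tau>' \<in> sigmas q"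
  and ps: "phi C \<sigma> = a \<cdot>\<^sub>m \<sigma>'" and pt: "phi C \<tau> = b \<cdot>\<^sub>m \<tau>'"
  shows "two_copy C (S_mat \<sigma> \<tau>) = (a * b) \<cdot>\<^sub>m S_mat \<sigma>' \<tau>'"
    "two_copy C (A_mat \<sigma> \<tau>) = (a * b) \<cdot>\<^sub>m A_mat \<sigma>' \<tau>'"
proof -
  define n where "n = (2::nat)^q"
  have U: "unitary_mat n C" using cliff_unitary[OF C] n_def by simp
  have UK: "unitary_mat (n*n) (kron C C)" using kron_unitary[OF U] .
  have c: "\<sigma> \<in> carrier_mat n n" "\<tau> \<in> carrier_mat n n" "\<sigma>' \<in> carrier_mat n n" "\<tau>' \<in> carrier_mat n n"
    using sig_c s n_def by auto
  have k: "kron \<sigma> \<tau> \<in> carrier_mat (n*n) (n*n)" "kron \<tau> \<sigma> \<in> carrier_mat (n*n) (n*n)"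
    "kron \<sigma>' \<tau>' \<in> carrier_mat (n*n) (n*n)" "kron \<tau>' \<sigma>' \<in> carrier_mat (n*n) (n*n)"
    using c by auto
  have e1: "phi (kron C C) (kron \<sigma> \<tau>) = (a * b) \<cdot>\<^sub>m kron \<sigma>' \<tau>'"
    unfolding tc_phi[symmetric] tc_kron[OF U c(1,2)] ps pt kron_sc ..
  have e2: "phi (kron C C) (kron \<tau> \<sigma>) = (a * b) \<cdot>\<^sub>m kron \<tau>' \<sigma>'"
    unfolding tc_phi[symmetric] tc_kron[OF U c(2,1)] ps pt kron_sc2 ..
  show "two_copy C (S_mat \<sigma> \<tau>) = (a * b) \<cdot>\<^sub>m S_mat \<sigma>' \<tau>'"
    unfolding tc_phi S_mat_def phi_smult[OF UK add_carrier_mat[OF k(2)]] phi_add[OF UK k(1,2)] e1 e2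
      smult_add_m[OF k(3,4), symmetric]
    by (rule smult_comm_m)
  show "two_copy C (A_mat \<sigma> \<tau>) = (a * b) \<cdot>\<^sub>m A_mat \<sigma>' \<tau>'"
    unfolding tc_phi A_mat_def phi_smult[OF UK minus_carrier_mat[OF k(2)]] phi_minus[OF UK k(1,2)] e1 e2
      smult_minus_m[OF k(3,4), symmetric]
    by (rule smult_comm_m)
qed

lemma sigma0_c: "sigma0 q \<in> carrier_mat (2^q) (2^q)"
  unfolding sigma0_def by simp

lemma phi_sigma0: "C \<in> clifford q \<Longrightarrow> phi C (sigma0 q) = sigma0 q"
  unfolding sigma0_def using phi_smult[OF cliff_unitary] phi_one[OF cliff_unitary] by simp

lemma sig_kron_c: "\<sigma> \<in> carrier_mat (2^q) (2^q) \<Longrightarrow> \<tau> \<in> carrier_mat (2^q) (2^q) \<Longrightarrow> kron \<sigma> \<tau> \<in> carrier_mat (2^q * 2^q) (2^q * 2^q)"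
  by simp

lemma inv_id: "invariant_space q (V_id q)"
  unfolding V_id_def
proof (rule span_inv)
  show "{kron (sigma0 q) (sigma0 q)} \<subseteq> carrier_mat (2^q * 2^q) (2^q * 2^q)" using sigma0_c by simp
  fix C s assume C: "C \<in> clifford q" and s: "s \<in> {kron (sigma0 q) (sigma0 q)}"
  have "two_copy C s = s" using s tc_kron[OF cliff_unitary[OF C] sigma0_c sigma0_c] phi_sigma0[OF C] by simp
  then show "two_copy C s \<in> mat_span (2^q * 2^q) {kron (sigma0 q) (sigma0 q)}" using s mat_span.gen by simp
qed

lemma inv_r: "invariant_space q (V_r q)"
  unfolding V_r_def
proof (rule span_inv)
  show "{kron (sigma0 q) \<tau> | \<tau>. \<tau> \<in> sigmas q} \<subseteq> carrier_mat (2^q * 2^q) (2^q * 2^q)" using sigma0_c sig_c by auto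
  fix C s assume C: "C \<in> clifford q" and s: "s \<in> {kron (sigma0 q) \<tau> | \<tau>. \<tau> \<in> sigmas q}"
  then obtain \<tau> where t: "\<tau> \<in> sigmas q" "s = kron (sigma0 q) \<tau>" by blast
  obtain b \<tau>' where t': "\<tau>' \<in> sigmas q" "phi C \<tau> = b \<cdot>\<^sub>m \<tau>'" using cliff_act[OF C t(1)] by blast
  have "two_copy C s = b \<cdot>\<^sub>m kron (sigma0 q) \<tau>'"
    unfolding t(2) tc_kron[OF cliff_unitary[OF C] sigma0_c sig_c[OF t(1)]] phi_sigma0[OF C] t'(2) kron_smult_r ..
  then show "two_copy C s \<in> mat_span (2^q * 2^q) {kron (sigma0 q) \<tau> | \<tau>. \<tau> \<in> sigmas q}"
    using t' mat_span.gen mat_span.smult by (metis (mono_tags, lifting) mem_Collect_eq)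
qed

lemma inv_l: "invariant_space q (V_l q)"
  unfolding V_l_def
proof (rule span_inv)
  show "{kron \<tau> (sigma0 q) | \<tau>. \<tau> \<in> sigmas q} \<subseteq> carrier_mat (2^q * 2^q) (2^q * 2^q)" using sigma0_c sig_c by auto
  fix C s assume C: "C \<in> clifford q" and s: "s \<in> {kron \<tau> (sigma0 q) | \<tau>. \<tau> \<in> sigmas q}"
  then obtain \<tau> where t: "\<tau> \<in> sigmas q" "s = kron \<tau> (sigma0 q)" by blast
  obtain b \<tau>' where t': "\<tau>' \<in> sigmas q" "phi C \<tau> = b \<cdot>\<^sub>m \<tau>'" using cliff_act[OF C t(1)] by blast
  have "two_copy C s = b \<cdot>\<^sub>m kron \<tau>' (sigma0 q)"
    unfolding t(2) tc_kron[OF cliff_unitary[OF C] sig_c[OF t(1)] sigma0_c] phi_sigma0[OF C] t'(2) kron_smult_l ..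
  then show "two_copy C s \<in> mat_span (2^q * 2^q) {kron \<tau> (sigma0 q) | \<tau>. \<tau> \<in> sigmas q}"
    using t' mat_span.gen mat_span.smult by (metis (mono_tags, lifting) mem_Collect_eq)
qed

lemma inv_d: "invariant_space q (V_d q)"
  unfolding V_d_def
proof (rule span_inv)
  show "{kron \<tau> \<tau> | \<tau>. \<tau> \<in> sigmas q} \<subseteq> carrier_mat (2^q * 2^q) (2^q * 2^q)" using sig_c by auto
  fix C s assume C: "C \<in> clifford q" and s: "s \<in> {kron \<tau> \<tau> | \<tau>. \<tau> \<in> sigmas q}"
  then obtain \<tau> where t: "\<tau> \<in> sigmas q" "s = kron \<tau> \<tau>" by blast
  obtain b \<tau>' where t': "\<tau>' \<in> sigmas q" "phi C \<tau> = b \<cdot>\<^sub>m \<tau>'" using cliff_act[OF C t(1)] by blast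
  have "two_copy C s = (b * b) \<cdot>\<^sub>m kron \<tau>' \<tau>'"
    unfolding t(2) tc_kron[OF cliff_unitary[OF C] sig_c[OF t(1)] sig_c[OF t(1)]] t'(2) kron_sc ..
  then show "two_copy C s \<in> mat_span (2^q * 2^q) {kron \<tau> \<tau> | \<tau>. \<tau> \<in> sigmas q}"
    using t' mat_span.gen mat_span.smult by (metis (mono_tags, lifting) mem_Collect_eq)
qed


lemma inv_Sc: "invariant_space q (V_S_comm q)"
  unfolding V_S_comm_def
proof (rule span_inv)
  show "{S_mat \<sigma> \<tau> | \<sigma> \<tau>. \<tau> \<in> sigmas q \<and> \<sigma> \<in> C_set q \<tau>} \<subseteq> carrier_mat (2^q * 2^q) (2^q * 2^q)"
  proof
    fix x assume "x \<in> {S_mat \<sigma> \<tau> | \<sigma> \<tau>. \<tau> \<in> sigmas q \<and> \<sigma> \<in> C_set q \<tau>}"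
    then obtain \<sigma> \<tau> where st: "\<tau> \<in> sigmas q" "\<sigma> \<in> sigmas q" "x = S_mat \<sigma> \<tau>" unfolding C_set_def by blast
    have "kron \<sigma> \<tau> \<in> carrier_mat (2^q * 2^q) (2^q * 2^q)" "kron \<tau> \<sigma> \<in> carrier_mat (2^q * 2^q) (2^q * 2^q)"
      using sig_c[OF st(1)] sig_c[OF st(2)] by auto
    then show "x \<in> carrier_mat (2^q * 2^q) (2^q * 2^q)" unfolding st(3) S_mat_def by (simp add: minus_carrier_mat)
  qed
  fix C s assume C: "C \<in> clifford q" and s: "s \<in> {S_mat \<sigma> \<tau> | \<sigma> \<tau>. \<tau> \<in> sigmas q \<and> \<sigma> \<in> C_set q \<tau>}"
  then obtain \<sigma> \<tau> where st: "\<tau> \<in> sigmas q" "\<sigma> \<in> C_set q \<tau>" "s = S_mat \<sigma> \<tau>" by blast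
  have ss: "\<sigma> \<in> sigmas q" using st(2) unfolding C_set_def by blast
  obtain a \<sigma>' where s': "\<sigma>' \<in> sigmas q" "a \<noteq> 0" "phi C \<sigma> = a \<cdot>\<^sub>m \<sigma>'" using cliff_act[OF C ss] by blast
  obtain b \<tau>' where t': "\<tau>' \<in> sigmas q" "b \<noteq> 0" "phi C \<tau> = b \<cdot>\<^sub>m \<tau>'" using cliff_act[OF C st(1)] by blast
  note facts = C ss st(1) s'(1) t'(1) s'(2) t'(2) s'(3) t'(3)
  have mem: "\<sigma>' \<in> C_set q \<tau>'"
    using st(2) s'(1) cl_noteq[OF facts] cl_comm[OF facts] unfolding C_set_def by auto
  have eq: "two_copy C s = (a * b) \<cdot>\<^sub>m S_mat \<sigma>' \<tau>'"
    unfolding st(3) by (rule tc_pair(1)[OF C ss st(1) s'(1) t'(1) s'(3) t'(3)])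
  have memS: "S_mat \<sigma>' \<tau>' \<in> {S_mat \<sigma> \<tau> | \<sigma> \<tau>. \<tau> \<in> sigmas q \<and> \<sigma> \<in> C_set q \<tau>}"
    by (rule CollectI, rule exI[of _ "\<sigma>'"], rule exI[of _ "\<tau>'"]) (simp add: mem t'(1))
  show "two_copy C s \<in> mat_span (2^q * 2^q) {S_mat \<sigma> \<tau> | \<sigma> \<tau>. \<tau> \<in> sigmas q \<and> \<sigma> \<in> C_set q \<tau>}"
    unfolding eq by (rule mat_span.smult[OF mat_span.gen[OF memS]])
qed

lemma inv_Sa: "invariant_space q (V_S_anti q)"
  unfolding V_S_anti_def
proof (rule span_inv)
  show "{S_mat \<sigma> \<tau> | \<sigma> \<tau>. \<tau> \<in> sigmas q \<and> \<sigma> \<in> N_set q \<tau>} \<subseteq> carrier_mat (2^q * 2^q) (2^q * 2^q)"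
  proof
    fix x assume "x \<in> {S_mat \<sigma> \<tau> | \<sigma> \<tau>. \<tau> \<in> sigmas q \<and> \<sigma> \<in> N_set q \<tau>}"
    then obtain \<sigma> \<tau> where st: "\<tau> \<in> sigmas q" "\<sigma> \<in> sigmas q" "x = S_mat \<sigma> \<tau>" unfolding N_set_def by blast
    have "kron \<sigma> \<tau> \<in> carrier_mat (2^q * 2^q) (2^q * 2^q)" "kron \<tau> \<sigma> \<in> carrier_mat (2^q * 2^q) (2^q * 2^q)"
      using sig_c[OF st(1)] sig_c[OF st(2)] by auto
    then show "x \<in> carrier_mat (2^q * 2^q) (2^q * 2^q)" unfolding st(3) S_mat_def by (simp add: minus_carrier_mat)
  qed
  fix C s assume C: "C \<in> clifford q" and s: "s \<in> {S_mat \<sigma> \<tau> | \<sigma> \<tau>. \<tau> \<in> sigmas q \<and> \<sigma> \<in> N_set q \<tau>}"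
  then obtain \<sigma> \<tau> where st: "\<tau> \<in> sigmas q" "\<sigma> \<in> N_set q \<tau>" "s = S_mat \<sigma> \<tau>" by blast
  have ss: "\<sigma> \<in> sigmas q" using st(2) unfolding N_set_def by blast
  obtain a \<sigma>' where s': "\<sigma>' \<in> sigmas q" "a \<noteq> 0" "phi C \<sigma> = a \<cdot>\<^sub>m \<sigma>'" using cliff_act[OF C ss] by blast
  obtain b \<tau>' where t': "\<tau>' \<in> sigmas q" "b \<noteq> 0" "phi C \<tau> = b \<cdot>\<^sub>m \<tau>'" using cliff_act[OF C st(1)] by blast
  note facts = C ss st(1) s'(1) t'(1) s'(2) t'(2) s'(3) t'(3)
  have mem: "\<sigma>' \<in> N_set q \<tau>'"
    using st(2) s'(1) cl_noteq[OF facts] cl_anti[OF facts] unfolding N_set_def by auto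
  have eq: "two_copy C s = (a * b) \<cdot>\<^sub>m S_mat \<sigma>' \<tau>'"
    unfolding st(3) by (rule tc_pair(1)[OF C ss st(1) s'(1) t'(1) s'(3) t'(3)])
  have memS: "S_mat \<sigma>' \<tau>' \<in> {S_mat \<sigma> \<tau> | \<sigma> \<tau>. \<tau> \<in> sigmas q \<and> \<sigma> \<in> N_set q \<tau>}"
    by (rule CollectI, rule exI[of _ "\<sigma>'"], rule exI[of _ "\<tau>'"]) (simp add: mem t'(1))
  show "two_copy C s \<in> mat_span (2^q * 2^q) {S_mat \<sigma> \<tau> | \<sigma> \<tau>. \<tau> \<in> sigmas q \<and> \<sigma> \<in> N_set q \<tau>}"
    unfolding eq by (rule mat_span.smult[OF mat_span.gen[OF memS]])
qed

lemma inv_Ac: "invariant_space q (V_A_comm q)"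
  unfolding V_A_comm_def
proof (rule span_inv)
  show "{A_mat \<sigma> \<tau> | \<sigma> \<tau>. \<tau> \<in> sigmas q \<and> \<sigma> \<in> C_set q \<tau>} \<subseteq> carrier_mat (2^q * 2^q) (2^q * 2^q)"
  proof
    fix x assume "x \<in> {A_mat \<sigma> \<tau> | \<sigma> \<tau>. \<tau> \<in> sigmas q \<and> \<sigma> \<in> C_set q \<tau>}"
    then obtain \<sigma> \<tau> where st: "\<tau> \<in> sigmas q" "\<sigma> \<in> sigmas q" "x = A_mat \<sigma> \<tau>" unfolding C_set_def by blast
    have "kron \<sigma> \<tau> \<in> carrier_mat (2^q * 2^q) (2^q * 2^q)" "kron \<tau> \<sigma> \<in> carrier_mat (2^q * 2^q) (2^q * 2^q)"
      using sig_c[OF st(1)] sig_c[OF st(2)] by auto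
    then show "x \<in> carrier_mat (2^q * 2^q) (2^q * 2^q)" unfolding st(3) A_mat_def by (simp add: minus_carrier_mat)
  qed
  fix C s assume C: "C \<in> clifford q" and s: "s \<in> {A_mat \<sigma> \<tau> | \<sigma> \<tau>. \<tau> \<in> sigmas q \<and> \<sigma> \<in> C_set q \<tau>}"
  then obtain \<sigma> \<tau> where st: "\<tau> \<in> sigmas q" "\<sigma> \<in> C_set q \<tau>" "s = A_mat \<sigma> \<tau>" by blast
  have ss: "\<sigma> \<in> sigmas q" using st(2) unfolding C_set_def by blast
  obtain a \<sigma>' where s': "\<sigma>' \<in> sigmas q" "a \<noteq> 0" "phi C \<sigma> = a \<cdot>\<^sub>m \<sigma>'" using cliff_act[OF C ss] by blast
  obtain b \<tau>' where t': "\<tau>' \<in> sigmas q" "b \<noteq> 0" "phi C \<tau> = b \<cdot>\<^sub>m \<tau>'" using cliff_act[OF C st(1)] by blast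
  note facts = C ss st(1) s'(1) t'(1) s'(2) t'(2) s'(3) t'(3)
  have mem: "\<sigma>' \<in> C_set q \<tau>'"
    using st(2) s'(1) cl_noteq[OF facts] cl_comm[OF facts] unfolding C_set_def by auto
  have eq: "two_copy C s = (a * b) \<cdot>\<^sub>m A_mat \<sigma>' \<tau>'"
    unfolding st(3) by (rule tc_pair(2)[OF C ss st(1) s'(1) t'(1) s'(3) t'(3)])
  have memS: "A_mat \<sigma>' \<tau>' \<in> {A_mat \<sigma> \<tau> | \<sigma> \<tau>. \<tau> \<in> sigmas q \<and> \<sigma> \<in> C_set q \<tau>}"
    by (rule CollectI, rule exI[of _ "\<sigma>'"], rule exI[of _ "\<tau>'"]) (simp add: mem t'(1))
  show "two_copy C s \<in> mat_span (2^q * 2^q) {A_mat \<sigma> \<tau> | \<sigma> \<tau>. \<tau> \<in> sigmas q \<and> \<sigma> \<in> C_set q \<tau>}"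
    unfolding eq by (rule mat_span.smult[OF mat_span.gen[OF memS]])
qed

lemma inv_Aa: "invariant_space q (V_A_anti q)"
  unfolding V_A_anti_def
proof (rule span_inv)
  show "{A_mat \<sigma> \<tau> | \<sigma> \<tau>. \<tau> \<in> sigmas q \<and> \<sigma> \<in> N_set q \<tau>} \<subseteq> carrier_mat (2^q * 2^q) (2^q * 2^q)"
  proof
    fix x assume "x \<in> {A_mat \<sigma> \<tau> | \<sigma> \<tau>. \<tau> \<in> sigmas q \<and> \<sigma> \<in> N_set q \<tau>}"
    then obtain \<sigma> \<tau> where st: "\<tau> \<in> sigmas q" "\<sigma> \<in> sigmas q" "x = A_mat \<sigma> \<tau>" unfolding N_set_def by blast
    have "kron \<sigma> \<tau> \<in> carrier_mat (2^q * 2^q) (2^q * 2^q)" "kron \<tau> \<sigma> \<in> carrier_mat (2^q * 2^q) (2^q * 2^q)"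
      using sig_c[OF st(1)] sig_c[OF st(2)] by auto
    then show "x \<in> carrier_mat (2^q * 2^q) (2^q * 2^q)" unfolding st(3) A_mat_def by (simp add: minus_carrier_mat)
  qed
  fix C s assume C: "C \<in> clifford q" and s: "s \<in> {A_mat \<sigma> \<tau> | \<sigma> \<tau>. \<tau> \<in> sigmas q \<and> \<sigma> \<in> N_set q \<tau>}"
  then obtain \<sigma> \<tau> where st: "\<tau> \<in> sigmas q" "\<sigma> \<in> N_set q \<tau>" "s = A_mat \<sigma> \<tau>" by blast
  have ss: "\<sigma> \<in> sigmas q" using st(2) unfolding N_set_def by blast
  obtain a \<sigma>' where s': "\<sigma>' \<in> sigmas q" "a \<noteq> 0" "phi C \<sigma> = a \<cdot>\<^sub>m \<sigma>'" using cliff_act[OF C ss] by blast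
  obtain b \<tau>' where t': "\<tau>' \<in> sigmas q" "b \<noteq> 0" "phi C \<tau> = b \<cdot>\<^sub>m \<tau>'" using cliff_act[OF C st(1)] by blast
  note facts = C ss st(1) s'(1) t'(1) s'(2) t'(2) s'(3) t'(3)
  have mem: "\<sigma>' \<in> N_set q \<tau>'"
    using st(2) s'(1) cl_noteq[OF facts] cl_anti[OF facts] unfolding N_set_def by auto
  have eq: "two_copy C s = (a * b) \<cdot>\<^sub>m A_mat \<sigma>' \<tau>'"
    unfolding st(3) by (rule tc_pair(2)[OF C ss st(1) s'(1) t'(1) s'(3) t'(3)])
  have memS: "A_mat \<sigma>' \<tau>' \<in> {A_mat \<sigma> \<tau> | \<sigma> \<tau>. \<tau> \<in> sigmas q \<and> \<sigma> \<in> N_set q \<tau>}"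
    by (rule CollectI, rule exI[of _ "\<sigma>'"], rule exI[of _ "\<tau>'"]) (simp add: mem t'(1))
  show "two_copy C s \<in> mat_span (2^q * 2^q) {A_mat \<sigma> \<tau> | \<sigma> \<tau>. \<tau> \<in> sigmas q \<and> \<sigma> \<in> N_set q \<tau>}"
    unfolding eq by (rule mat_span.smult[OF mat_span.gen[OF memS]])
qed

theorem lemma3:
  fixes q :: nat
  assumes "q \<ge> 1"
  shows "\<forall>W \<in> {V_id q, V_r q, V_l q, V_d q, V_S_comm q, V_S_anti q, V_A_comm q, V_A_anti q}.
           invariant_space q W"
  using inv_id inv_r inv_l inv_d inv_Sc inv_Sa inv_Ac inv_Aa by auto


end
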